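(* Let $n>4$ and let $L$ and ${}^*L=e^{\sigma(x)}L+\beta$ be as in the context. Define $\eta_{hijk}=\frac1L\big[S_{hijk}-(h_{jh}M_{ik}+h_{ik}M_{jh}-h_{hk}M_{ij}-h_{ij}M_{hk})\big]$ and ${}^*\eta_{hijk}$ by the same formula built from ${}^*L$. Then ${}^*\eta_{hijk}=e^{\sigma(x)}\eta_{hijk}$.
   Context: $M$ is a smooth manifold of dimension $n$ with local coordinates $(x^i)$ and induced fiber coordinates $(y^i)$ on $TM$. $L(x,y)$ is a Finsler metric: positive and smooth for $y\neq0$, positively homogeneous of degree 1 in $y$, with positive definite fundamental tensor $g_{ij}=\frac12\frac{\partial^2L^2}{\partial y^i\partial y^j}$ and inverse $g^{ij}$. $\sigma(x)$ is a smooth function on $M$ and $\beta(x,y)=b_i(x)y^i$ is a 1-form; the conformal $\beta$-change is ${}^*L=e^{\sigma(x)}L+\beta$, assumed to be again a Finsler metric. Notation: $l_i=\partial L/\partial y^i$, $h_{ij}=g_{ij}-l_il_j$, $c_{ijk}=\frac12\partial g_{ij}/\partial y^k$, $c_h{}^r{}_k=g^{rs}c_{hsk}$, $S_{hijk}=c_{ijr}c_h{}^r{}_k-c_{ikr}c_h{}^r{}_j$, $S_{ik}=g^{hj}S_{hijk}$, $S=g^{ik}S_{ik}$, and $M_{ij}=\frac{1}{n-3}\big[S_{ij}-\frac{S\,h_{ij}}{2(n-2)}\big]$. Quantities built from ${}^*L$ by the same formulas (using ${}^*g_{ij}$ and its inverse ${}^*g^{ij}$) are denoted with a left asterisk. 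*)

theory Defs
  imports "HOL-Analysis.Analysis"
begin

text \<open>Fiber coordinates y on T_xM are modelled by real^'n; a Finsler metric at a
point x is a function F :: real^'n => real of y. All objects in the statement
involve only y-derivatives at fixed x.\<close>

definition pd :: "'n::finite \<Rightarrow> (real^'n \<Rightarrow> real) \<Rightarrow> real^'n \<Rightarrow> real" where
  "pd i f y = deriv (\<lambda>t. f (y + t *\<^sub>R axis i 1)) 0"

fun iter_pd :: "'n::finite list \<Rightarrow> (real^'n \<Rightarrow> real) \<Rightarrow> real^'n \<Rightarrow> real" where
  "iter_pd [] f = f"
| "iter_pd (i # is) f = pd i (iter_pd is f)"

definition smooth_off0 :: "(real^'n::finite \<Rightarrow> real) \<Rightarrow> bool" where
  "smooth_off0 f \<longleftrightarrow> (\<forall>is y. y \<noteq> 0 \<longrightarrow> iter_pd is f differentiable (at y))"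

definition fund :: "(real^'n::finite \<Rightarrow> real) \<Rightarrow> real^'n \<Rightarrow> 'n \<Rightarrow> 'n \<Rightarrow> real" where
  "fund F y i j = pd i (pd j (\<lambda>v. (F v)^2)) y / 2"

definition fund_inv :: "(real^'n::finite \<Rightarrow> real) \<Rightarrow> real^'n \<Rightarrow> 'n \<Rightarrow> 'n \<Rightarrow> real" where
  "fund_inv F y i j = matrix_inv (\<chi> a b. fund F y a b) $ i $ j"

definition finsler :: "(real^'n::finite \<Rightarrow> real) \<Rightarrow> bool" where
  "finsler F \<longleftrightarrow> smooth_off0 F
     \<and> (\<forall>y. y \<noteq> 0 \<longrightarrow> F y > 0)
     \<and> (\<forall>y t. t > 0 \<longrightarrow> F (t *\<^sub>R y) = t * F y)
     \<and> (\<forall>y. y \<noteq> 0 \<longrightarrow> (\<forall>\<xi>. \<xi> \<noteq> 0 \<longrightarrow> (\<Sum>i\<in>UNIV. \<Sum>j\<in>UNIV. fund F y i j * \<xi>$i * \<xi>$j) > 0))"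

definition lvec :: "(real^'n::finite \<Rightarrow> real) \<Rightarrow> real^'n \<Rightarrow> 'n \<Rightarrow> real" where
  "lvec F y i = pd i F y"

definition hang :: "(real^'n::finite \<Rightarrow> real) \<Rightarrow> real^'n \<Rightarrow> 'n \<Rightarrow> 'n \<Rightarrow> real" where
  "hang F y i j = fund F y i j - lvec F y i * lvec F y j"

definition cart :: "(real^'n::finite \<Rightarrow> real) \<Rightarrow> real^'n \<Rightarrow> 'n \<Rightarrow> 'n \<Rightarrow> 'n \<Rightarrow> real" where
  "cart F y i j k = pd k (\<lambda>v. fund F v i j) y / 2"

definition cart_up :: "(real^'n::finite \<Rightarrow> real) \<Rightarrow> real^'n \<Rightarrow> 'n \<Rightarrow> 'n \<Rightarrow> 'n \<Rightarrow> real" where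
  "cart_up F y h r k = (\<Sum>s\<in>UNIV. fund_inv F y r s * cart F y h s k)"

definition Scurv :: "(real^'n::finite \<Rightarrow> real) \<Rightarrow> real^'n \<Rightarrow> 'n \<Rightarrow> 'n \<Rightarrow> 'n \<Rightarrow> 'n \<Rightarrow> real" where
  "Scurv F y h i j k = (\<Sum>r\<in>UNIV. cart F y i j r * cart_up F y h r k - cart F y i k r * cart_up F y h r j)"

definition Sric :: "(real^'n::finite \<Rightarrow> real) \<Rightarrow> real^'n \<Rightarrow> 'n \<Rightarrow> 'n \<Rightarrow> real" where
  "Sric F y i k = (\<Sum>h\<in>UNIV. \<Sum>j\<in>UNIV. fund_inv F y h j * Scurv F y h i j k)"

definition Sscal :: "(real^'n::finite \<Rightarrow> real) \<Rightarrow> real^'n \<Rightarrow> real" where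
  "Sscal F y = (\<Sum>i\<in>UNIV. \<Sum>k\<in>UNIV. fund_inv F y i k * Sric F y i k)"

definition Mten :: "(real^'n::finite \<Rightarrow> real) \<Rightarrow> real^'n \<Rightarrow> 'n \<Rightarrow> 'n \<Rightarrow> real" where
  "Mten F y i j = (1 / (real CARD('n) - 3)) *
     (Sric F y i j - Sscal F y * hang F y i j / (2 * (real CARD('n) - 2)))"

definition eta :: "(real^'n::finite \<Rightarrow> real) \<Rightarrow> real^'n \<Rightarrow> 'n \<Rightarrow> 'n \<Rightarrow> 'n \<Rightarrow> 'n \<Rightarrow> real" where
  "eta F y h i j k = (1 / F y) * (Scurv F y h i j k
      - (hang F y j h * Mten F y i k + hang F y i k * Mten F y j h
         - hang F y h k * Mten F y i j - hang F y i j * Mten F y h k))"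

end

theory Submission
  imports Defs
begin

lemma line_deriv:
  fixes f :: "real^'n::finite \<Rightarrow> real"
  assumes "(f has_derivative f') (at (p + s *\<^sub>R e))"
  shows "((\<lambda>t. f (p + t *\<^sub>R e)) has_real_derivative f' e) (at s)"
proof -
  have l: "((\<lambda>t. p + t *\<^sub>R e) has_derivative (\<lambda>t. t *\<^sub>R e)) (at s)"
    by (auto intro!: derivative_eq_intros)
  have "((\<lambda>t. f (p + t *\<^sub>R e)) has_derivative (\<lambda>t. f' (t *\<^sub>R e))) (at s)"
    using has_derivative_compose[OF l assms] by (simp add: o_def)
  moreover have "linear f'" using assms has_derivative_linear by blast
  moreover have "(\<lambda>t. f' (t *\<^sub>R e)) = (*) (f' e)"
    using calculation(2) by (auto simp: linear_cmul mult.commute)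
  ultimately show ?thesis
    unfolding has_field_derivative_def by simp
qed

lemma pd_eq:
  assumes "(f has_derivative f') (at v)"
  shows "pd i f v = f' (axis i 1)"
proof -
  have "((\<lambda>t. f (v + t *\<^sub>R axis i 1)) has_real_derivative f' (axis i 1)) (at 0)"
    by (rule line_deriv) (use assms in simp)
  then show ?thesis unfolding pd_def by (rule DERIV_imp_deriv)
qed

lemma has_derivative_pd:
  fixes f :: "real^'n::finite \<Rightarrow> real"
  assumes "f differentiable (at v)"
  shows "(f has_derivative (\<lambda>h. \<Sum>k\<in>UNIV. h$k * pd k f v)) (at v)"
proof -
  obtain f' where f': "(f has_derivative f') (at v)" using assms unfolding differentiable_def by blast
  have lin: "linear f'" using f' has_derivative_linear by blast
  have "f' h = (\<Sum>k\<in>UNIV. h$k * pd k f v)" for h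
  proof -
    have "f' h = f' (\<Sum>k\<in>UNIV. (h$k) *s axis k 1)" by (simp add: basis_expansion)
    also have "\<dots> = (\<Sum>k\<in>UNIV. h$k * f' (axis k 1))"
      by (simp add: linear_sum[OF lin] scalar_mult_eq_scaleR linear_cmul[OF lin])
    finally show ?thesis by (simp add: pd_eq[OF f'])
  qed
  then have "f' = (\<lambda>h. \<Sum>k\<in>UNIV. h$k * pd k f v)" by auto
  with f' show ?thesis by simp
qed

lemma pd_cong:
  fixes f g :: "real^'n::finite \<Rightarrow> real"
  assumes "open S" "v \<in> S" "\<And>w. w \<in> S \<Longrightarrow> f w = g w"
  shows "pd i f v = pd i g v"
proof -
  obtain r where r: "r > 0" "ball v r \<subseteq> S" using assms(1,2) open_contains_ball by blast
  have "eventually (\<lambda>t. f (v + t *\<^sub>R axis i 1) = g (v + t *\<^sub>R axis i 1)) (nhds (0::real))"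
    unfolding eventually_nhds_metric
  proof (intro exI[of _ r] conjI allI impI)
    fix t :: real assume "dist t 0 < r"
    then have "v + t *\<^sub>R axis i 1 \<in> ball v r" by (simp add: dist_norm)
    then show "f (v + t *\<^sub>R axis i 1) = g (v + t *\<^sub>R axis i 1)" using r assms(3) by blast
  qed (use r in auto)
  then show ?thesis unfolding pd_def by (rule deriv_cong_ev) simp
qed

lemma sum_axis[simp]: "(\<Sum>k\<in>UNIV. axis i (1::real) $ k * a k) = a i"
proof -
  have "(\<Sum>k\<in>UNIV. axis i (1::real) $ k * a k) = (\<Sum>k\<in>UNIV. if k = i then a k else 0)"
    by (rule sum.cong) (auto simp: axis_def)
  then show ?thesis by simp
qed

lemma pd_add: "f differentiable (at v) \<Longrightarrow> g differentiable (at v) \<Longrightarrow>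
   pd i (\<lambda>w. f w + g w) v = pd i f v + pd i g v"
  by (subst pd_eq[OF has_derivative_add[OF has_derivative_pd has_derivative_pd]]) (auto simp: pd_eq)

lemma pd_mult: "f differentiable (at v) \<Longrightarrow> g differentiable (at v) \<Longrightarrow>
   pd i (\<lambda>w. f w * g w) v = pd i f v * g v + f v * pd i g v"
  by (subst pd_eq[OF has_derivative_mult[OF has_derivative_pd has_derivative_pd]]) (auto simp: pd_eq)

lemma pd_cmult: "f differentiable (at v) \<Longrightarrow> pd i (\<lambda>w. c * f w) v = c * pd i f v"
  by (subst pd_eq[OF has_derivative_mult_right[OF has_derivative_pd]]) (auto simp: pd_eq)

lemma pd_const: "pd i (\<lambda>w. c) v = 0"
  by (subst pd_eq[OF has_derivative_const]) simp

lemma pd_inner: "pd i (\<lambda>w. b \<bullet> (w::real^'n::finite)) v = b $ i"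
proof -
  have "((\<lambda>w. b \<bullet> w) has_derivative (\<lambda>w. b \<bullet> w)) (at v)"
    by (auto intro!: derivative_eq_intros)
  then have "pd i (\<lambda>w. b \<bullet> w) v = b \<bullet> axis i 1" by (rule pd_eq)
  then show ?thesis by (simp add: inner_axis)
qed

lemma pd_square: "f differentiable (at v) \<Longrightarrow> pd i (\<lambda>w. (f w)^2) v = 2 * f v * pd i f v"
  using pd_mult[of f v f i] by (simp add: power2_eq_square)

lemma differentiable_pd_cmult_inner:
  "f differentiable (at v) \<Longrightarrow> (\<lambda>w. c * f w + b \<bullet> w) differentiable (at v)"
  by (auto intro!: derivative_intros)

lemma dist_v_add: "dist v (v + w) = norm (w::'a::real_normed_vector)"
  by (metis add_diff_cancel_left' dist_commute dist_norm)

lemma schwarz_est: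
  fixes f :: "real^'n::finite \<Rightarrow> real"
  assumes S: "open S" "v \<in> S" and df: "\<And>w. w\<in>S \<Longrightarrow> f differentiable (at w)"
    and di: "(pd i f has_derivative D) (at v)" and e: "e > 0"
  shows "\<exists>d>0. \<forall>h. 0 < h \<and> h < d \<longrightarrow>
     \<bar>(f (v + h *\<^sub>R axis i 1 + h *\<^sub>R axis j 1) - f (v + h *\<^sub>R axis i 1) - f (v + h *\<^sub>R axis j 1) + f v)
        - h^2 * D (axis j 1)\<bar> \<le> 3 * e * h^2"
proof -
  obtain r where r: "r > 0" "ball v r \<subseteq> S" using S open_contains_ball by blast
  have lin: "linear D" using di has_derivative_linear by blast
  obtain d1 where d1: "d1 > 0" "\<And>y. norm (y - v) < d1 \<Longrightarrow>
      norm (pd i f y - pd i f v - D (y - v)) \<le> e * norm (y - v)"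
    using di e unfolding has_derivative_at_alt by metis
  define d where "d = min (r/2) (d1/2)"
  have "d > 0" using r d1 by (simp add: d_def)
  moreover have "\<bar>(f (v + h *\<^sub>R axis i 1 + h *\<^sub>R axis j 1) - f (v + h *\<^sub>R axis i 1) - f (v + h *\<^sub>R axis j 1) + f v)
        - h^2 * D (axis j 1)\<bar> \<le> 3 * e * h^2" if h: "0 < h" "h < d" for h
  proof -
    define ei :: "real^'n" where "ei = axis i 1"
    define ej :: "real^'n" where "ej = axis j 1"
    define u where "u = (\<lambda>s. f (v + h *\<^sub>R ej + s *\<^sub>R ei) - f (v + s *\<^sub>R ei))"
    define u' where "u' = (\<lambda>s. pd i f (v + h *\<^sub>R ej + s *\<^sub>R ei) - pd i f (v + s *\<^sub>R ei))"
    have nei: "norm ei = 1" "norm ej = 1" by (simp_all add: ei_def ej_def)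
    have inS: "v + h *\<^sub>R ej + s *\<^sub>R ei \<in> S" "v + s *\<^sub>R ei \<in> S" if "0 \<le> s" "s \<le> h" for s
    proof -
      have "norm (h *\<^sub>R ej + s *\<^sub>R ei) \<le> h + s"
        using norm_triangle_ineq[of "h *\<^sub>R ej" "s *\<^sub>R ei"] that h nei by simp
      then have "dist v (v + (h *\<^sub>R ej + s *\<^sub>R ei)) < r" using that h r unfolding d_def
        by (simp only: dist_v_add)
      then have "dist v (v + h *\<^sub>R ej + s *\<^sub>R ei) < r" by (simp add: add.assoc)
      then show "v + h *\<^sub>R ej + s *\<^sub>R ei \<in> S" using r by auto
      have "dist v (v + s *\<^sub>R ei) < r" using that h r nei unfolding d_def
        by (simp add: dist_v_add)
      then show "v + s *\<^sub>R ei \<in> S" using r by auto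
    qed
    have der: "(u has_real_derivative u' s) (at s)" if "0 \<le> s" "s \<le> h" for s
    proof -
      have a: "((\<lambda>t. f (v + h *\<^sub>R ej + t *\<^sub>R ei)) has_real_derivative pd i f (v + h *\<^sub>R ej + s *\<^sub>R ei)) (at s)"
        using line_deriv[OF has_derivative_pd[OF df[OF inS(1)[OF that]]]]
        by (simp add: ei_def)
      have b: "((\<lambda>t. f (v + t *\<^sub>R ei)) has_real_derivative pd i f (v + s *\<^sub>R ei)) (at s)"
        using line_deriv[OF has_derivative_pd[OF df[OF inS(2)[OF that]]]]
        by (simp add: ei_def)
      show ?thesis unfolding u_def u'_def by (rule DERIV_diff[OF a b])
    qed
    obtain z where z: "0 < z" "z < h" "u h - u 0 = (h - 0) * u' z"
      using MVT2[OF h(1) der] by blast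
    have Delta: "u h - u 0 = f (v + h *\<^sub>R ei + h *\<^sub>R ej) - f (v + h *\<^sub>R ei) - f (v + h *\<^sub>R ej) + f v"
      unfolding u_def by (simp add: algebra_simps)
    define w1 where "w1 = h *\<^sub>R ej + z *\<^sub>R ei"
    define w2 where "w2 = z *\<^sub>R ei"
    have nw1: "norm w1 \<le> 2 * h"
      using norm_triangle_ineq[of "h *\<^sub>R ej" "z *\<^sub>R ei"] z h nei unfolding w1_def by simp
    have nw2: "norm w2 \<le> h" using z nei unfolding w2_def by simp
    have hd1: "2 * h < d1" using h unfolding d_def by simp
    have e1: "norm (pd i f (v + w1) - pd i f v - D w1) \<le> e * norm w1"
      using d1(2)[of "v + w1"] nw1 hd1 by simp
    have e2: "norm (pd i f (v + w2) - pd i f v - D w2) \<le> e * norm w2"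
      using d1(2)[of "v + w2"] nw2 hd1 h by simp
    have Dw: "D w1 - D w2 = h * D ej"
      unfolding w1_def w2_def using lin by (simp add: linear_add linear_cmul)
    have "u' z = (pd i f (v + w1) - pd i f v - D w1) - (pd i f (v + w2) - pd i f v - D w2) + h * D ej"
      unfolding u'_def w1_def w2_def using Dw[unfolded w1_def w2_def] by (simp add: add.assoc)
    then have "\<bar>u' z - h * D ej\<bar> \<le> e * norm w1 + e * norm w2"
      using e1 e2 by (simp add: abs_diff_le_iff) linarith?
    also have "\<dots> \<le> e * (2*h) + e * h"
      using nw1 nw2 e by (intro add_mono mult_left_mono) auto
    finally have "\<bar>u' z - h * D ej\<bar> \<le> 3 * e * h" by simp
    then have "h * \<bar>u' z - h * D ej\<bar> \<le> h * (3 * e * h)" using h by (intro mult_left_mono) auto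
    moreover have "\<bar>h * u' z - h^2 * D ej\<bar> = h * \<bar>u' z - h * D ej\<bar>"
    proof -
      have "h * u' z - h^2 * D ej = h * (u' z - h * D ej)" by (simp add: power2_eq_square algebra_simps)
      then show ?thesis using h by (simp add: abs_mult)
    qed
    ultimately have "\<bar>h * u' z - h^2 * D ej\<bar> \<le> 3 * e * h^2"
      by (simp add: power2_eq_square algebra_simps)
    then show ?thesis using z(3) Delta by (simp add: ei_def ej_def)
  qed
  ultimately show ?thesis by blast
qed

lemma schwarz:
  fixes f :: "real^'n::finite \<Rightarrow> real"
  assumes S: "open S" "v \<in> S" and df: "\<And>w. w\<in>S \<Longrightarrow> f differentiable (at w)"
    and di: "pd i f differentiable (at v)" and dj: "pd j f differentiable (at v)"
  shows "pd j (pd i f) v = pd i (pd j f) v"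
proof -
  obtain Di where Di: "(pd i f has_derivative Di) (at v)" using di unfolding differentiable_def by blast
  obtain Dj where Dj: "(pd j f has_derivative Dj) (at v)" using dj unfolding differentiable_def by blast
  have A: "pd j (pd i f) v = Di (axis j 1)" by (rule pd_eq[OF Di])
  have B: "pd i (pd j f) v = Dj (axis i 1)" by (rule pd_eq[OF Dj])
  show ?thesis
  proof (rule ccontr)
    assume ne: "pd j (pd i f) v \<noteq> pd i (pd j f) v"
    define e where "e = \<bar>Di (axis j 1) - Dj (axis i 1)\<bar> / 12"
    have e: "e > 0" using ne A B by (simp add: e_def)
    obtain d where d: "d > 0" "\<And>h. 0 < h \<and> h < d \<Longrightarrow>
     \<bar>(f (v + h *\<^sub>R axis i 1 + h *\<^sub>R axis j 1) - f (v + h *\<^sub>R axis i 1) - f (v + h *\<^sub>R axis j 1) + f v)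
        - h^2 * Di (axis j 1)\<bar> \<le> 3 * e * h^2"
      using schwarz_est[OF S df Di e] by blast
    obtain d' where d': "d' > 0" "\<And>h. 0 < h \<and> h < d' \<Longrightarrow>
     \<bar>(f (v + h *\<^sub>R axis j 1 + h *\<^sub>R axis i 1) - f (v + h *\<^sub>R axis j 1) - f (v + h *\<^sub>R axis i 1) + f v)
        - h^2 * Dj (axis i 1)\<bar> \<le> 3 * e * h^2"
      using schwarz_est[OF S df Dj e] by blast
    define h where "h = min d d' / 2"
    have h: "0 < h" "h < d" "h < d'" using d d' by (auto simp: h_def)
    have 1: "\<bar>(f (v + h *\<^sub>R axis i 1 + h *\<^sub>R axis j 1) - f (v + h *\<^sub>R axis i 1) - f (v + h *\<^sub>R axis j 1) + f v)
        - h^2 * Di (axis j 1)\<bar> \<le> 3 * e * h^2" using d h by blast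
    have 2: "\<bar>(f (v + h *\<^sub>R axis i 1 + h *\<^sub>R axis j 1) - f (v + h *\<^sub>R axis i 1) - f (v + h *\<^sub>R axis j 1) + f v)
        - h^2 * Dj (axis i 1)\<bar> \<le> 3 * e * h^2" using d'(2)[of h] h by (simp add: algebra_simps)
    have tri: "\<bar>a - b\<bar> \<le> 2 * t" if "\<bar>X - a\<bar> \<le> t" "\<bar>X - b\<bar> \<le> t" for X a b t :: real
      using that by arith
    have "\<bar>h^2 * Di (axis j 1) - h^2 * Dj (axis i 1)\<bar> \<le> 2 * (3 * e * h^2)"
      by (rule tri[OF 1 2])
    moreover have "\<bar>h^2 * Di (axis j 1) - h^2 * Dj (axis i 1)\<bar> = h^2 * \<bar>Di (axis j 1) - Dj (axis i 1)\<bar>"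
      by (simp add: abs_mult flip: right_diff_distrib)
    ultimately have "h^2 * \<bar>Di (axis j 1) - Dj (axis i 1)\<bar> \<le> 6 * e * h^2" by simp
    then have "\<bar>Di (axis j 1) - Dj (axis i 1)\<bar> \<le> 6 * e" using h
      by (simp add: mult.commute[of "h^2"])
    then show False using e unfolding e_def by simp
  qed
qed

lemma hom_pd:
  fixes f :: "real^'n::finite \<Rightarrow> real"
  assumes hom: "\<And>w t. w \<noteq> 0 \<Longrightarrow> t > 0 \<Longrightarrow> f (t *\<^sub>R w) = \<phi> t * f w"
   and df: "\<And>w. w \<noteq> 0 \<Longrightarrow> f differentiable (at w)"
   and w: "w \<noteq> 0" and t: "t > 0"
  shows "pd i f (t *\<^sub>R w) = \<phi> t / t * pd i f w"
proof -
  define e :: "real^'n" where "e = axis i 1"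
  have ne: "norm e = 1" by (simp add: e_def)
  have a: "((\<lambda>s. f (w + s *\<^sub>R e)) has_real_derivative pd i f w) (at 0)"
  proof -
    have hd: "(f has_derivative (\<lambda>h. \<Sum>k\<in>UNIV. h$k * pd k f w)) (at (w + 0 *\<^sub>R e))"
      using has_derivative_pd[OF df[OF w]] by simp
    show ?thesis using line_deriv[OF hd] by (simp add: e_def)
  qed
  have b: "((\<lambda>s. s / t) has_real_derivative 1 / t) (at 0)"
    using t by (auto intro!: derivative_eq_intros)
  have c: "((\<lambda>s. f (w + (s / t) *\<^sub>R e)) has_real_derivative pd i f w * (1 / t)) (at 0)"
  proof -
    have a': "((\<lambda>s. f (w + s *\<^sub>R e)) has_real_derivative pd i f w) (at ((\<lambda>s. s/t) 0))" using a by simp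
    show ?thesis using DERIV_chain[OF a' b] by (simp add: o_def)
  qed
  have d: "((\<lambda>s. \<phi> t * f (w + (s / t) *\<^sub>R e)) has_real_derivative \<phi> t * (pd i f w * (1 / t))) (at 0)"
    by (rule DERIV_cmult[OF c])
  have "((\<lambda>s. f (t *\<^sub>R w + s *\<^sub>R e)) has_real_derivative \<phi> t * (pd i f w * (1 / t))) (at 0)"
  proof (rule has_field_derivative_transform_within_open[OF d, of "ball 0 (t * norm w)"])
    show "open (ball (0::real) (t * norm w))" by simp
    show "(0::real) \<in> ball 0 (t * norm w)" using t w by simp
    fix s :: real assume "s \<in> ball 0 (t * norm w)"
    then have s: "\<bar>s\<bar> < t * norm w" by simp
    have nz: "w + (s / t) *\<^sub>R e \<noteq> 0"
    proof
      assume "w + (s / t) *\<^sub>R e = 0"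
      then have "w = - ((s / t) *\<^sub>R e)" by (simp add: eq_neg_iff_add_eq_0)
      then have "norm w = \<bar>s\<bar> / t" using ne t by simp
      then show False using s t by (simp add: field_simps)
    qed
    have "t *\<^sub>R w + s *\<^sub>R e = t *\<^sub>R (w + (s / t) *\<^sub>R e)" using t by (simp add: algebra_simps)
    then show "\<phi> t * f (w + (s / t) *\<^sub>R e) = f (t *\<^sub>R w + s *\<^sub>R e)"
      using hom[OF nz t] by simp
  qed
  then have "pd i f (t *\<^sub>R w) = \<phi> t * (pd i f w * (1 / t))"
    unfolding pd_def e_def[symmetric] by (rule DERIV_imp_deriv)
  then show ?thesis by simp
qed

lemma euler:
  fixes f :: "real^'n::finite \<Rightarrow> real"
  assumes df: "f differentiable (at w)" and hom: "\<And>t. t > 0 \<Longrightarrow> f (t *\<^sub>R w) = \<phi> t * f w"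
    and dphi: "(\<phi> has_real_derivative d) (at 1)"
  shows "(\<Sum>k\<in>UNIV. w$k * pd k f w) = d * f w"
proof -
  have l: "((\<lambda>t. t *\<^sub>R w) has_derivative (\<lambda>t. t *\<^sub>R w)) (at 1)"
    by (auto intro!: derivative_eq_intros)
  have "((\<lambda>t. f (t *\<^sub>R w)) has_derivative (\<lambda>h. \<Sum>k\<in>UNIV. (h *\<^sub>R w)$k * pd k f w)) (at 1)"
  proof -
    have hd: "(f has_derivative (\<lambda>h. \<Sum>k\<in>UNIV. h$k * pd k f w)) (at (1 *\<^sub>R w))"
      using has_derivative_pd[OF df] by simp
    show ?thesis using has_derivative_compose[OF l hd] by (simp add: o_def)
  qed
  moreover have "(\<lambda>h. \<Sum>k\<in>UNIV. (h *\<^sub>R w)$k * pd k f w) = (*) (\<Sum>k\<in>UNIV. w$k * pd k f w)"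
    by (auto simp: sum_distrib_left algebra_simps)
  ultimately have A: "((\<lambda>t. f (t *\<^sub>R w)) has_real_derivative (\<Sum>k\<in>UNIV. w$k * pd k f w)) (at 1)"
    unfolding has_field_derivative_def by simp
  have B0: "((\<lambda>t. \<phi> t * f w) has_real_derivative d * f w) (at 1)"
    using DERIV_mult[OF dphi DERIV_const[of "f w"]] by simp
  have B: "((\<lambda>t. f (t *\<^sub>R w)) has_real_derivative d * f w) (at 1)"
    by (rule has_field_derivative_transform_within_open[OF B0, of "{0<..}"]) (auto simp: hom)
  show ?thesis using DERIV_unique[OF A B] .
qed

lemma open_nz: "open (UNIV - {0::real^'n::finite})" by auto

context
  fixes F :: "real^'n::finite \<Rightarrow> real"
  assumes fin: "finsler F"
begin

lemma fin_smooth: "v \<noteq> 0 \<Longrightarrow> iter_pd is F differentiable (at v)"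
  using fin unfolding finsler_def smooth_off0_def by blast

lemma fin_d0: "v \<noteq> 0 \<Longrightarrow> F differentiable (at v)"
  using fin_smooth[of v "[]"] by simp
lemma fin_d1: "v \<noteq> 0 \<Longrightarrow> pd j F differentiable (at v)"
  using fin_smooth[of v "[j]"] by simp
lemma fin_d2: "v \<noteq> 0 \<Longrightarrow> pd i (pd j F) differentiable (at v)"
  using fin_smooth[of v "[i,j]"] by simp
lemma fin_d3: "v \<noteq> 0 \<Longrightarrow> pd k (pd i (pd j F)) differentiable (at v)"
  using fin_smooth[of v "[k,i,j]"] by simp

lemma fin_pos: "v \<noteq> 0 \<Longrightarrow> F v > 0"
  using fin unfolding finsler_def by blast

lemma fin_hom: "t > 0 \<Longrightarrow> F (t *\<^sub>R v) = t * F v"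
  using fin unfolding finsler_def by blast

lemma fin_posdef: "v \<noteq> 0 \<Longrightarrow> \<xi> \<noteq> 0 \<Longrightarrow> (\<Sum>i\<in>UNIV. \<Sum>j\<in>UNIV. fund F v i j * \<xi>$i * \<xi>$j) > 0"
  using fin unfolding finsler_def by blast

lemma fin_fund: "v \<noteq> 0 \<Longrightarrow> fund F v i j = pd i F v * pd j F v + F v * pd i (pd j F) v"
proof -
  assume v: "v \<noteq> 0"
  have "pd i (pd j (\<lambda>u. (F u)^2)) v = pd i (\<lambda>w. 2 * (F w * pd j F w)) v"
    by (rule pd_cong[OF open_nz]) (use v in \<open>auto simp: pd_square fin_d0\<close>)
  also have "\<dots> = 2 * (pd i F v * pd j F v + F v * pd i (pd j F) v)"
    using v by (simp add: pd_cmult pd_mult fin_d0 fin_d1 differentiable_mult)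
  finally show ?thesis unfolding fund_def by simp
qed

lemma fin_cart: "y \<noteq> 0 \<Longrightarrow> cart F y i j k = (pd k (pd i F) y * pd j F y + pd i F y * pd k (pd j F) y
    + pd k F y * pd i (pd j F) y + F y * pd k (pd i (pd j F)) y) / 2"
proof -
  assume y: "y \<noteq> 0"
  have "pd k (\<lambda>v. fund F v i j) y = pd k (\<lambda>v. pd i F v * pd j F v + F v * pd i (pd j F) v) y"
    by (rule pd_cong[OF open_nz]) (use y fin_fund in auto)
  also have "\<dots> = pd k (pd i F) y * pd j F y + pd i F y * pd k (pd j F) y
    + (pd k F y * pd i (pd j F) y + F y * pd k (pd i (pd j F)) y)"
    using y by (simp add: pd_add pd_mult fin_d0 fin_d1 fin_d2 differentiable_mult)
  finally show ?thesis unfolding cart_def by simp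
qed

lemma fin_hom1: "w \<noteq> 0 \<Longrightarrow> t > 0 \<Longrightarrow> pd j F (t *\<^sub>R w) = pd j F w"
  using hom_pd[of F "\<lambda>t. t", OF fin_hom fin_d0] by simp

lemma fin_hom2: "w \<noteq> 0 \<Longrightarrow> t > 0 \<Longrightarrow> pd i (pd j F) (t *\<^sub>R w) = (1/t) * pd i (pd j F) w"
  by (rule hom_pd[where \<phi>="\<lambda>t. 1"]) (auto simp: fin_hom1 fin_d1)

lemma fin_euler0: "y \<noteq> 0 \<Longrightarrow> (\<Sum>k\<in>UNIV. y$k * pd k F y) = F y"
  using euler[of F y "\<lambda>t. t" 1, OF fin_d0 fin_hom] by simp

lemma fin_euler1: "y \<noteq> 0 \<Longrightarrow> (\<Sum>k\<in>UNIV. y$k * pd k (pd j F) y) = 0"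
proof -
  assume y: "y \<noteq> 0"
  have "(\<Sum>k\<in>UNIV. y$k * pd k (pd j F) y) = 0 * pd j F y"
    by (rule euler[where \<phi>="\<lambda>t. 1"]) (auto simp: y fin_hom1 fin_d1)
  then show ?thesis by simp
qed

lemma fin_euler2: "y \<noteq> 0 \<Longrightarrow> (\<Sum>k\<in>UNIV. y$k * pd k (pd i (pd j F)) y) = - pd i (pd j F) y"
proof -
  assume y: "y \<noteq> 0"
  have d: "((\<lambda>t::real. 1 / t) has_real_derivative -1) (at 1)"
    by (auto intro!: derivative_eq_intros)
  show ?thesis using euler[of "pd i (pd j F)" y "\<lambda>t. 1/t" "-1", OF fin_d2[OF y] _ d] fin_hom2[OF y] by simp
qed

lemma fin_schwarz2: "v \<noteq> 0 \<Longrightarrow> pd i (pd j F) v = pd j (pd i F) v"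
  by (rule schwarz[OF open_nz]) (auto simp: fin_d0 fin_d1)

lemma fin_schwarz3: "v \<noteq> 0 \<Longrightarrow> pd k (pd i (pd j F)) v = pd i (pd k (pd j F)) v"
  by (rule schwarz[OF open_nz]) (auto simp: fin_d1 fin_d2)

end

context
  fixes F :: "real^'n::finite \<Rightarrow> real"
  assumes fin: "finsler F"
begin

lemma fin_gsym: "v \<noteq> 0 \<Longrightarrow> fund F v i j = fund F v j i"
  using fin_fund[OF fin] fin_schwarz2[OF fin] by (simp add: mult.commute)

lemma fin_hang: "y \<noteq> 0 \<Longrightarrow> hang F y i j = F y * pd i (pd j F) y"
  unfolding hang_def lvec_def using fin_fund[OF fin] by simp

lemma fin_Csym1: "y \<noteq> 0 \<Longrightarrow> cart F y i j k = cart F y j i k"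
  unfolding cart_def by (subst pd_cong[OF open_nz, of y "\<lambda>v. fund F v i j" "\<lambda>v. fund F v j i"])
    (auto simp: fin_gsym)

lemma fin_d3': "y \<noteq> 0 \<Longrightarrow> pd k (pd i (pd j F)) y = pd j (pd i (pd k F)) y"
proof -
  assume y: "y \<noteq> 0"
  have "pd k (pd i (pd j F)) y = pd k (pd j (pd i F)) y"
    by (rule pd_cong[OF open_nz]) (auto simp: y fin_schwarz2[OF fin])
  also have "\<dots> = pd j (pd k (pd i F)) y" by (rule fin_schwarz3[OF fin y])
  also have "\<dots> = pd j (pd i (pd k F)) y"
    by (rule pd_cong[OF open_nz]) (auto simp: y fin_schwarz2[OF fin])
  finally show ?thesis .
qed

lemma fin_Csym2: "y \<noteq> 0 \<Longrightarrow> cart F y i j k = cart F y i k j"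
proof -
  assume y: "y \<noteq> 0"
  have a: "pd k (pd i (pd j F)) y = pd j (pd i (pd k F)) y" by (rule fin_d3'[OF y])
  have b: "pd k (pd i F) y = pd i (pd k F) y" by (rule fin_schwarz2[OF fin y])
  have c: "pd k (pd j F) y = pd j (pd k F) y" by (rule fin_schwarz2[OF fin y])
  have d: "pd i (pd j F) y = pd j (pd i F) y" by (rule fin_schwarz2[OF fin y])
  show ?thesis by (simp only: fin_cart[OF fin y] a b c d) (simp add: algebra_simps)
qed

lemma fin_gy: "y \<noteq> 0 \<Longrightarrow> (\<Sum>j\<in>UNIV. fund F y i j * y$j) = F y * lvec F y i"
proof -
  assume y: "y \<noteq> 0"
  have "(\<Sum>j\<in>UNIV. fund F y i j * y$j) = pd i F y * (\<Sum>j\<in>UNIV. y$j * pd j F y)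
      + F y * (\<Sum>j\<in>UNIV. y$j * pd j (pd i F) y)"
    by (simp add: fin_fund[OF fin y] fin_schwarz2[OF fin y] sum_distrib_left sum.distrib algebra_simps)
  also have "\<dots> = pd i F y * F y" by (simp add: fin_euler0[OF fin y] fin_euler1[OF fin y])
  finally show ?thesis by (simp add: lvec_def mult.commute)
qed

lemma fin_Cy: "y \<noteq> 0 \<Longrightarrow> (\<Sum>k\<in>UNIV. cart F y i j k * y$k) = 0"
proof -
  assume y: "y \<noteq> 0"
  have "(\<Sum>k\<in>UNIV. cart F y i j k * y$k) = (pd j F y * (\<Sum>k\<in>UNIV. y$k * pd k (pd i F) y)
     + pd i F y * (\<Sum>k\<in>UNIV. y$k * pd k (pd j F) y) + pd i (pd j F) y * (\<Sum>k\<in>UNIV. y$k * pd k F y)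
     + F y * (\<Sum>k\<in>UNIV. y$k * pd k (pd i (pd j F)) y)) / 2"
  proof -
    have "(\<Sum>k\<in>UNIV. cart F y i j k * y$k) = (\<Sum>k\<in>UNIV. (pd j F y * (y$k * pd k (pd i F) y) + pd i F y * (y$k * pd k (pd j F) y) + pd i (pd j F) y * (y$k * pd k F y) + F y * (y$k * pd k (pd i (pd j F)) y)) / 2)"
      by (rule sum.cong) (auto simp: fin_cart[OF fin y] algebra_simps)
    also have "\<dots> = (\<Sum>k\<in>UNIV. (pd j F y * (y$k * pd k (pd i F) y) + pd i F y * (y$k * pd k (pd j F) y) + pd i (pd j F) y * (y$k * pd k F y) + F y * (y$k * pd k (pd i (pd j F)) y))) / 2"
      by (rule sum_divide_distrib[symmetric])
    finally show ?thesis by (simp only: sum.distrib sum_distrib_left)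
  qed
  also have "\<dots> = 0"
    by (simp add: fin_euler0[OF fin y] fin_euler1[OF fin y] fin_euler2[OF fin y])
  finally show ?thesis .
qed

lemma fin_ly: "y \<noteq> 0 \<Longrightarrow> (\<Sum>i\<in>UNIV. lvec F y i * y$i) = F y"
  using fin_euler0[OF fin] by (simp add: lvec_def mult.commute)

lemma fin_invertible: "y \<noteq> 0 \<Longrightarrow> invertible (\<chi> a b. fund F y a b)"
proof -
  assume y: "y \<noteq> 0"
  let ?A = "(\<chi> a b. fund F y a b) :: real^'n^'n"
  have "\<forall>x. ?A *v x = 0 \<longrightarrow> x = 0"
  proof (intro allI impI)
    fix x :: "real^'n" assume ax: "?A *v x = 0"
    have "(\<Sum>i\<in>UNIV. \<Sum>j\<in>UNIV. fund F y i j * x$i * x$j) = (\<Sum>i\<in>UNIV. x$i * (?A *v x)$i)"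
      by (simp add: matrix_vector_mult_def sum_distrib_left algebra_simps)
    also have "\<dots> = 0" using ax by simp
    finally show "x = 0" using fin_posdef[OF fin y, of x] by force
  qed
  then obtain B where "B ** ?A = mat 1" using matrix_left_invertible_ker by blast
  then have "B ** ?A = mat 1" "?A ** B = mat 1" using matrix_left_right_inverse by auto
  then show ?thesis unfolding invertible_def by blast
qed

lemma fin_inv: "y \<noteq> 0 \<Longrightarrow> (\<Sum>s\<in>UNIV. fund_inv F y r s * fund F y s k) = (if r = k then 1 else 0)"
   "y \<noteq> 0 \<Longrightarrow> (\<Sum>s\<in>UNIV. fund F y r s * fund_inv F y s k) = (if r = k then 1 else 0)"
proof -
  assume y: "y \<noteq> 0"
  let ?A = "(\<chi> a b. fund F y a b) :: real^'n^'n"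
  have "?A ** matrix_inv ?A = mat 1 \<and> matrix_inv ?A ** ?A = mat 1"
    using fin_invertible[OF y] unfolding invertible_def matrix_inv_def by (rule someI_ex)
  then have 1: "?A ** matrix_inv ?A = mat 1" and 2: "matrix_inv ?A ** ?A = mat 1" by auto
  show "(\<Sum>s\<in>UNIV. fund_inv F y r s * fund F y s k) = (if r = k then 1 else 0)"
    using arg_cong[OF 2, of "\<lambda>M. M $ r $ k"] unfolding fund_inv_def
    by (simp add: matrix_matrix_mult_def mat_def)
  show "(\<Sum>s\<in>UNIV. fund F y r s * fund_inv F y s k) = (if r = k then 1 else 0)"
    using arg_cong[OF 1, of "\<lambda>M. M $ r $ k"] unfolding fund_inv_def
    by (simp add: matrix_matrix_mult_def mat_def)
qed

end

context
  fixes F :: "real^'n::finite \<Rightarrow> real" and c :: real and b :: "real^'n"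
  assumes finF: "finsler F" and finG: "finsler (\<lambda>y. c * F y + b \<bullet> y)"
begin

lemma G_pd1: "v \<noteq> 0 \<Longrightarrow> pd i (\<lambda>y. c * F y + b \<bullet> y) v = c * pd i F v + b $ i"
  by (subst pd_add) (auto simp: pd_cmult pd_inner fin_d0[OF finF] intro!: derivative_intros)

lemma G_pd2: "v \<noteq> 0 \<Longrightarrow> pd i (pd j (\<lambda>y. c * F y + b \<bullet> y)) v = c * pd i (pd j F) v"
proof -
  assume v: "v \<noteq> 0"
  have "pd i (pd j (\<lambda>y. c * F y + b \<bullet> y)) v = pd i (\<lambda>w. c * pd j F w + b $ j) v"
    by (rule pd_cong[OF open_nz]) (auto simp: v G_pd1)
  also have "\<dots> = c * pd i (pd j F) v"
    by (subst pd_add) (auto simp: v pd_cmult pd_const fin_d1[OF finF] intro!: derivative_intros)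
  finally show ?thesis .
qed

lemma G_pd3: "v \<noteq> 0 \<Longrightarrow> pd k (pd i (pd j (\<lambda>y. c * F y + b \<bullet> y))) v = c * pd k (pd i (pd j F)) v"
proof -
  assume v: "v \<noteq> 0"
  have "pd k (pd i (pd j (\<lambda>y. c * F y + b \<bullet> y))) v = pd k (\<lambda>w. c * pd i (pd j F) w) v"
    by (rule pd_cong[OF open_nz]) (auto simp: v G_pd2)
  also have "\<dots> = c * pd k (pd i (pd j F)) v"
    by (auto simp: v pd_cmult fin_d2[OF finF])
  finally show ?thesis .
qed

lemma G_hang: "y \<noteq> 0 \<Longrightarrow> hang (\<lambda>y. c * F y + b \<bullet> y) y i j
   = (c * (c * F y + b \<bullet> y) / F y) * hang F y i j"
proof -
  assume y: "y \<noteq> 0"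
  have F0: "F y \<noteq> 0" using fin_pos[OF finF y] by simp
  show ?thesis using F0 by (simp only: fin_hang[OF finG y] fin_hang[OF finF y] G_pd2[OF y]) (simp add: field_simps)
qed

lemma G_cart: "y \<noteq> 0 \<Longrightarrow> cart (\<lambda>y. c * F y + b \<bullet> y) y i j k
   = (c * (c * F y + b \<bullet> y) / F y) * cart F y i j k
     + (c / (2 * F y)) * (hang F y k i * (lvec (\<lambda>y. c * F y + b \<bullet> y) y j - ((c * F y + b \<bullet> y) / F y) * lvec F y j)
         + hang F y k j * (lvec (\<lambda>y. c * F y + b \<bullet> y) y i - ((c * F y + b \<bullet> y) / F y) * lvec F y i)
         + hang F y i j * (lvec (\<lambda>y. c * F y + b \<bullet> y) y k - ((c * F y + b \<bullet> y) / F y) * lvec F y k))"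
proof -
  assume y: "y \<noteq> 0"
  have F0: "F y \<noteq> 0" using fin_pos[OF finF y] by simp
  show ?thesis
    using F0 by (simp only: fin_cart[OF finG y] fin_cart[OF finF y] G_pd1[OF y] G_pd2[OF y] G_pd3[OF y]
       fin_hang[OF finF y] lvec_def) (simp add: field_simps)
qed

lemma G_my: "y \<noteq> 0 \<Longrightarrow> (\<Sum>a\<in>UNIV. (lvec (\<lambda>y. c * F y + b \<bullet> y) y a - ((c * F y + b \<bullet> y) / F y) * lvec F y a) * y$a) = 0"
proof -
  assume y: "y \<noteq> 0"
  have F0: "F y \<noteq> 0" using fin_pos[OF finF y] by simp
  have "(\<Sum>a\<in>UNIV. (lvec (\<lambda>y. c * F y + b \<bullet> y) y a - ((c * F y + b \<bullet> y) / F y) * lvec F y a) * y$a)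
     = (\<Sum>a\<in>UNIV. lvec (\<lambda>y. c * F y + b \<bullet> y) y a * y$a) - ((c * F y + b \<bullet> y) / F y) * (\<Sum>a\<in>UNIV. lvec F y a * y$a)"
    by (simp add: sum_subtractf sum_distrib_left left_diff_distrib mult.assoc)
  also have "\<dots> = 0" using F0 by (simp add: fin_ly[OF finG y] fin_ly[OF finF y])
  finally show ?thesis .
qed

end

definition Bf :: "('n::finite \<Rightarrow> 'n \<Rightarrow> real) \<Rightarrow> ('n \<Rightarrow> real) \<Rightarrow> ('n \<Rightarrow> real) \<Rightarrow> real" where
  "Bf gi \<alpha> \<beta> = (\<Sum>r\<in>UNIV. \<Sum>s\<in>UNIV. gi r s * \<alpha> r * \<beta> s)"

definition hor :: "('n::finite \<Rightarrow> real) \<Rightarrow> ('n \<Rightarrow> real) \<Rightarrow> bool" where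
  "hor y \<alpha> \<longleftrightarrow> (\<Sum>r\<in>UNIV. \<alpha> r * y r) = 0"

lemma delta1[simp]: fixes f :: "'n::finite \<Rightarrow> real" shows "(\<Sum>t\<in>UNIV. f t * (if j = t then 1 else 0)) = (f j::real)"
proof -
  have "(\<Sum>t\<in>UNIV. f t * (if j = t then 1 else 0)) = (\<Sum>t\<in>UNIV. if j = t then f t else 0)"
    by (rule sum.cong) auto
  then show ?thesis by (simp add: sum.delta')
qed
lemma delta2[simp]: fixes f :: "'n::finite \<Rightarrow> real" shows "(\<Sum>t\<in>UNIV. f t * (if t = j then 1 else 0)) = (f j::real)"
  using delta1[of f j] by (simp add: eq_commute[of j])
lemma delta3[simp]: fixes f :: "'n::finite \<Rightarrow> real" shows "(\<Sum>t\<in>UNIV. (if j = t then 1 else 0) * f t) = (f j::real)"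
  using delta1[of f j] by (simp add: mult.commute)
lemma delta4[simp]: fixes f :: "'n::finite \<Rightarrow> real" shows "(\<Sum>t\<in>UNIV. (if t = j then 1 else 0) * f t) = (f j::real)"
  using delta2[of f j] by (simp add: mult.commute)

lemma Bf_add1: "Bf gi (\<lambda>r. \<alpha> r + \<gamma> r) \<beta> = Bf gi \<alpha> \<beta> + Bf gi \<gamma> \<beta>"
  by (simp add: Bf_def algebra_simps sum.distrib)
lemma Bf_add2: "Bf gi \<beta> (\<lambda>r. \<alpha> r + \<gamma> r) = Bf gi \<beta> \<alpha> + Bf gi \<beta> \<gamma>"
  by (simp add: Bf_def algebra_simps sum.distrib)
lemma Bf_diff1: "Bf gi (\<lambda>r. \<alpha> r - \<gamma> r) \<beta> = Bf gi \<alpha> \<beta> - Bf gi \<gamma> \<beta>"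
  by (simp add: Bf_def algebra_simps sum_subtractf)
lemma Bf_diff2: "Bf gi \<beta> (\<lambda>r. \<alpha> r - \<gamma> r) = Bf gi \<beta> \<alpha> - Bf gi \<beta> \<gamma>"
  by (simp add: Bf_def algebra_simps sum_subtractf)
lemma Bf_cmult1: "Bf gi (\<lambda>r. c * \<alpha> r) \<beta> = c * Bf gi \<alpha> \<beta>"
  by (simp add: Bf_def sum_distrib_left algebra_simps)
lemma Bf_cmult2: "Bf gi \<beta> (\<lambda>r. c * \<alpha> r) = c * Bf gi \<beta> \<alpha>"
  by (simp add: Bf_def sum_distrib_left algebra_simps)
lemma Bf_sum1: "Bf gi (\<lambda>r. \<Sum>a\<in>UNIV. w a * \<beta> a r) \<alpha> = (\<Sum>a\<in>UNIV. w a * Bf gi (\<beta> a) \<alpha>)"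
proof -
  have "Bf gi (\<lambda>r. \<Sum>a\<in>UNIV. w a * \<beta> a r) \<alpha> = (\<Sum>r\<in>UNIV. \<Sum>s\<in>UNIV. \<Sum>a\<in>UNIV. w a * (gi r s * \<beta> a r * \<alpha> s))"
    unfolding Bf_def by (simp add: sum_distrib_left sum_distrib_right algebra_simps)
  also have "\<dots> = (\<Sum>r\<in>UNIV. \<Sum>a\<in>UNIV. \<Sum>s\<in>UNIV. w a * (gi r s * \<beta> a r * \<alpha> s))"
    by (rule sum.cong[OF refl], rule sum.swap)
  also have "\<dots> = (\<Sum>a\<in>UNIV. \<Sum>r\<in>UNIV. \<Sum>s\<in>UNIV. w a * (gi r s * \<beta> a r * \<alpha> s))"
    by (rule sum.swap)
  also have "\<dots> = (\<Sum>a\<in>UNIV. w a * Bf gi (\<beta> a) \<alpha>)"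
    unfolding Bf_def by (simp add: sum_distrib_left)
  finally show ?thesis .
qed
lemma Bf_sum2: "Bf gi \<alpha> (\<lambda>r. \<Sum>a\<in>UNIV. w a * \<beta> a r) = (\<Sum>a\<in>UNIV. w a * Bf gi \<alpha> (\<beta> a))"
proof -
  have "Bf gi \<alpha> (\<lambda>r. \<Sum>a\<in>UNIV. w a * \<beta> a r) = (\<Sum>r\<in>UNIV. \<Sum>s\<in>UNIV. \<Sum>a\<in>UNIV. w a * (gi r s * \<alpha> r * \<beta> a s))"
    unfolding Bf_def by (simp add: sum_distrib_left sum_distrib_right algebra_simps)
  also have "\<dots> = (\<Sum>r\<in>UNIV. \<Sum>a\<in>UNIV. \<Sum>s\<in>UNIV. w a * (gi r s * \<alpha> r * \<beta> a s))"
    by (rule sum.cong[OF refl], rule sum.swap)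
  also have "\<dots> = (\<Sum>a\<in>UNIV. \<Sum>r\<in>UNIV. \<Sum>s\<in>UNIV. w a * (gi r s * \<alpha> r * \<beta> a s))"
    by (rule sum.swap)
  also have "\<dots> = (\<Sum>a\<in>UNIV. w a * Bf gi \<alpha> (\<beta> a))"
    unfolding Bf_def by (simp add: sum_distrib_left)
  finally show ?thesis .
qed
lemma Bf_zero1: "Bf gi (\<lambda>r. 0) \<alpha> = 0" by (simp add: Bf_def)
lemma Bf_zero2: "Bf gi \<alpha> (\<lambda>r. 0) = 0" by (simp add: Bf_def)

locale fdata =
  fixes F :: real and y l :: "'n::finite \<Rightarrow> real" and g gi :: "'n \<Rightarrow> 'n \<Rightarrow> real"
    and C :: "'n \<Rightarrow> 'n \<Rightarrow> 'n \<Rightarrow> real"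
  assumes Fpos: "F > 0"
   and gsym: "g i j = g j i"
   and inv1: "(\<Sum>s\<in>UNIV. gi r s * g s k) = (if r = k then 1 else 0)"
   and inv2: "(\<Sum>s\<in>UNIV. g r s * gi s k) = (if r = k then 1 else 0)"
   and Csym1: "C i j k = C j i k" and Csym2: "C i j k = C i k j"
   and Cy: "(\<Sum>k\<in>UNIV. C i j k * y k) = 0"
   and gy: "(\<Sum>j\<in>UNIV. g i j * y j) = F * l i"
   and ly: "(\<Sum>i\<in>UNIV. l i * y i) = F"
begin

definition h where "h i j = g i j - l i * l j"

lemma hsym: "h i j = h j i" by (simp add: h_def gsym mult.commute)

lemma gisym: "gi i j = gi j i"
proof -
  have "gi i j = (\<Sum>t\<in>UNIV. gi i t * (if j = t then 1 else 0))" by simp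
  also have "\<dots> = (\<Sum>t\<in>UNIV. \<Sum>s\<in>UNIV. gi i t * (gi j s * g s t))"
    by (simp only: inv1[symmetric] sum_distrib_left)
  also have "\<dots> = (\<Sum>s\<in>UNIV. \<Sum>t\<in>UNIV. gi i t * (gi j s * g s t))" by (rule sum.swap)
  also have "\<dots> = (\<Sum>s\<in>UNIV. gi j s * (\<Sum>t\<in>UNIV. gi i t * g t s))"
    by (simp add: sum_distrib_left gsym ac_simps)
  also have "\<dots> = gi j i" by (simp add: inv1)
  finally show ?thesis .
qed

lemma gil: "(\<Sum>s\<in>UNIV. gi r s * l s) = y r / F"
proof -
  have "F * (\<Sum>s\<in>UNIV. gi r s * l s) = (\<Sum>s\<in>UNIV. gi r s * (F * l s))"
    by (simp add: sum_distrib_left ac_simps)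
  also have "\<dots> = (\<Sum>s\<in>UNIV. \<Sum>j\<in>UNIV. gi r s * (g s j * y j))"
    by (simp only: gy[symmetric] sum_distrib_left)
  also have "\<dots> = (\<Sum>j\<in>UNIV. \<Sum>s\<in>UNIV. gi r s * (g s j * y j))" by (rule sum.swap)
  also have "\<dots> = (\<Sum>j\<in>UNIV. (\<Sum>s\<in>UNIV. gi r s * g s j) * y j)"
    by (simp add: sum_distrib_right sum_distrib_left ac_simps)
  also have "\<dots> = y r" by (simp add: inv1)
  finally show ?thesis using Fpos by (simp add: field_simps)
qed

lemma hy: "(\<Sum>j\<in>UNIV. h i j * y j) = 0"
  by (simp add: h_def left_diff_distrib sum_subtractf gy mult.assoc ly flip: sum_distrib_left)

lemma gih: "(\<Sum>s\<in>UNIV. gi r s * h s b) = (if r = b then 1 else 0) - l b * y r / F"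
proof -
  have "(\<Sum>s\<in>UNIV. gi r s * h s b) = (\<Sum>s\<in>UNIV. gi r s * g s b) - (\<Sum>s\<in>UNIV. gi r s * l s) * l b"
    by (simp add: h_def right_diff_distrib sum_subtractf sum_distrib_right sum_distrib_left ac_simps)
  then show ?thesis by (simp add: inv1 gil)
qed

lemma Bf_hr: assumes "hor y \<alpha>" shows "Bf gi \<alpha> (\<lambda>s. h s b) = \<alpha> b"
proof -
  have "Bf gi \<alpha> (\<lambda>s. h s b) = (\<Sum>r\<in>UNIV. \<alpha> r * (\<Sum>s\<in>UNIV. gi r s * h s b))"
    unfolding Bf_def by (simp add: sum_distrib_left ac_simps)
  also have "\<dots> = (\<Sum>r\<in>UNIV. \<alpha> r * (if r = b then 1 else 0)) - l b / F * (\<Sum>r\<in>UNIV. \<alpha> r * y r)"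
    by (simp add: gih right_diff_distrib sum_subtractf sum_distrib_left ac_simps)
  also have "\<dots> = \<alpha> b" using assms unfolding hor_def by (simp add: if_distrib cong: if_cong)
  finally show ?thesis .
qed

lemma Bf_sym: "Bf gi \<alpha> \<beta> = Bf gi \<beta> \<alpha>"
  unfolding Bf_def by (subst sum.swap) (simp add: gisym ac_simps)

lemma Bf_hl: "hor y \<alpha> \<Longrightarrow> Bf gi (\<lambda>s. h s b) \<alpha> = \<alpha> b"
  using Bf_hr Bf_sym by metis

lemma hor_h: "hor y (\<lambda>s. h s b)"
  unfolding hor_def using hy[of b] by (simp add: hsym)

lemma hor_h': "hor y (h b)"
  unfolding hor_def using hy[of b] by simp

lemma hor_C: "hor y (C i j)"
  unfolding hor_def using Cy by simp

lemma trace_h: "(\<Sum>r\<in>UNIV. \<Sum>s\<in>UNIV. gi r s * h r s) = real CARD('n) - 1"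
proof -
  have "(\<Sum>r\<in>UNIV. \<Sum>s\<in>UNIV. gi r s * h r s) = (\<Sum>r\<in>UNIV. \<Sum>s\<in>UNIV. gi r s * h s r)"
    by (simp add: hsym)
  also have "\<dots> = (\<Sum>r\<in>UNIV. (1::real) - l r * y r / F)" by (simp add: gih)
  also have "\<dots> = real CARD('n) - (\<Sum>r\<in>UNIV. l r * y r) / F"
    by (simp add: sum_subtractf sum_divide_distrib)
  also have "\<dots> = real CARD('n) - 1" using Fpos by (simp add: ly)
  finally show ?thesis .
qed

lemma kernel: assumes "\<And>i. (\<Sum>j\<in>UNIV. h i j * w j) = 0"
  shows "w r = ((\<Sum>c\<in>UNIV. l c * w c) / F) * y r"
proof -
  have gw: "(\<Sum>j\<in>UNIV. g i j * w j) = l i * (\<Sum>c\<in>UNIV. l c * w c)" for i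
    using assms[of i] by (simp add: h_def left_diff_distrib right_diff_distrib sum_subtractf sum_distrib_left sum_distrib_right ac_simps)
  have "w r = (\<Sum>t\<in>UNIV. (\<Sum>s\<in>UNIV. gi r s * g s t) * w t)" by (simp add: inv1)
  also have "\<dots> = (\<Sum>t\<in>UNIV. \<Sum>s\<in>UNIV. gi r s * (g s t * w t))" by (simp add: sum_distrib_right sum_distrib_left ac_simps)
  also have "\<dots> = (\<Sum>s\<in>UNIV. \<Sum>t\<in>UNIV. gi r s * (g s t * w t))" by (rule sum.swap)
  also have "\<dots> = (\<Sum>s\<in>UNIV. gi r s * (\<Sum>t\<in>UNIV. g s t * w t))"
    by (simp add: sum_distrib_left)
  also have "\<dots> = (\<Sum>s\<in>UNIV. gi r s * l s * (\<Sum>c\<in>UNIV. l c * w c))"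
    by (simp add: gw mult.assoc)
  also have "\<dots> = (\<Sum>s\<in>UNIV. gi r s * l s) * (\<Sum>c\<in>UNIV. l c * w c)"
    by (simp add: sum_distrib_right)
  also have "\<dots> = ((\<Sum>c\<in>UNIV. l c * w c) / F) * y r" by (simp add: gil)
  finally show ?thesis .
qed

lemma h_gi: assumes "hor y \<alpha>" shows "(\<Sum>j\<in>UNIV. h i j * (\<Sum>b\<in>UNIV. gi j b * \<alpha> b)) = \<alpha> i"
proof -
  have "(\<Sum>j\<in>UNIV. h i j * (\<Sum>b\<in>UNIV. gi j b * \<alpha> b)) = (\<Sum>j\<in>UNIV. \<Sum>b\<in>UNIV. h i j * gi j b * \<alpha> b)"
    by (simp add: sum_distrib_left mult.assoc)
  also have "\<dots> = (\<Sum>b\<in>UNIV. \<Sum>j\<in>UNIV. h i j * gi j b * \<alpha> b)" by (rule sum.swap)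
  also have "\<dots> = (\<Sum>b\<in>UNIV. (\<Sum>j\<in>UNIV. gi b j * h j i) * \<alpha> b)"
    by (simp add: sum_distrib_right sum_distrib_left gisym hsym mult.commute)
  also have "\<dots> = (\<Sum>b\<in>UNIV. (if b = i then 1 else 0) * \<alpha> b - (l i / F) * (\<alpha> b * y b))"
    by (rule sum.cong) (auto simp: gih algebra_simps)
  also have "\<dots> = (\<Sum>b\<in>UNIV. (if b = i then 1 else 0) * \<alpha> b) - l i / F * (\<Sum>b\<in>UNIV. \<alpha> b * y b)"
    by (simp only: sum_subtractf sum_distrib_left)
  also have "\<dots> = \<alpha> i" using assms unfolding hor_def by simp
  finally show ?thesis .
qed

end

locale fpair = A: fdata F y l g gi C + B: fdata G y lG gG giG CG
  for F y l g gi C G lG gG giG CG +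
  fixes \<rho> :: real
  assumes rho: "\<rho> > 0" and hG: "B.h i j = \<rho> * A.h i j"
begin

definition K where "K b = (\<Sum>c\<in>UNIV. l c * (\<rho> * giG c b - gi c b))"

lemma decomp: assumes "hor y \<alpha>"
  shows "(\<Sum>b\<in>UNIV. giG a b * \<alpha> b) = (1/\<rho>) * (\<Sum>b\<in>UNIV. gi a b * \<alpha> b) + (\<Sum>b\<in>UNIV. K b * \<alpha> b) / (\<rho> * F) * y a"
proof -
  define w where "w c = \<rho> * (\<Sum>b\<in>UNIV. giG c b * \<alpha> b) - (\<Sum>b\<in>UNIV. gi c b * \<alpha> b)" for c
  have "(\<Sum>j\<in>UNIV. A.h i j * w j) = 0" for i
  proof -
    have "(\<Sum>j\<in>UNIV. A.h i j * w j) = (\<Sum>j\<in>UNIV. B.h i j * (\<Sum>b\<in>UNIV. giG j b * \<alpha> b))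
        - (\<Sum>j\<in>UNIV. A.h i j * (\<Sum>b\<in>UNIV. gi j b * \<alpha> b))"
      by (simp add: w_def hG right_diff_distrib sum_subtractf ac_simps)
    also have "\<dots> = 0" using B.h_gi[OF assms] A.h_gi[OF assms] by simp
    finally show ?thesis .
  qed
  then have wa: "w a = ((\<Sum>c\<in>UNIV. l c * w c) / F) * y a" by (rule A.kernel)
  have lw: "(\<Sum>c\<in>UNIV. l c * w c) = (\<Sum>b\<in>UNIV. K b * \<alpha> b)"
  proof -
    have "(\<Sum>c\<in>UNIV. l c * w c) = (\<Sum>c\<in>UNIV. \<Sum>b\<in>UNIV. l c * (\<rho> * giG c b - gi c b) * \<alpha> b)"
      by (simp add: w_def sum_distrib_left right_diff_distrib sum_subtractf ac_simps)
    also have "\<dots> = (\<Sum>b\<in>UNIV. \<Sum>c\<in>UNIV. l c * (\<rho> * giG c b - gi c b) * \<alpha> b)" by (rule sum.swap)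
    also have "\<dots> = (\<Sum>b\<in>UNIV. K b * \<alpha> b)" by (simp add: K_def sum_distrib_right)
    finally show ?thesis .
  qed
  have wa': "\<rho> * (\<Sum>b\<in>UNIV. giG a b * \<alpha> b) - (\<Sum>b\<in>UNIV. gi a b * \<alpha> b) = ((\<Sum>b\<in>UNIV. K b * \<alpha> b) / F) * y a"
    using wa lw unfolding w_def by simp
  show ?thesis using wa' rho A.Fpos by (simp add: field_simps)
qed

lemma contract: assumes h1: "\<And>b. hor y (\<lambda>a. Q a b)" and h2: "\<And>a. hor y (Q a)"
  shows "(\<Sum>a\<in>UNIV. \<Sum>b\<in>UNIV. giG a b * Q a b) = (1/\<rho>) * (\<Sum>a\<in>UNIV. \<Sum>b\<in>UNIV. gi a b * Q a b)"
proof -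
  have "(\<Sum>a\<in>UNIV. \<Sum>b\<in>UNIV. giG a b * Q a b) = (\<Sum>a\<in>UNIV. (1/\<rho>) * (\<Sum>b\<in>UNIV. gi a b * Q a b) + (\<Sum>b\<in>UNIV. K b * Q a b) / (\<rho> * F) * y a)"
    using decomp[OF h2] by simp
  also have "\<dots> = (1/\<rho>) * (\<Sum>a\<in>UNIV. \<Sum>b\<in>UNIV. gi a b * Q a b) + (\<Sum>a\<in>UNIV. \<Sum>b\<in>UNIV. K b * Q a b * y a) / (\<rho> * F)"
    by (simp add: sum.distrib sum_distrib_left sum_distrib_right sum_divide_distrib)
  also have "(\<Sum>a\<in>UNIV. \<Sum>b\<in>UNIV. K b * Q a b * y a) = (\<Sum>b\<in>UNIV. K b * (\<Sum>a\<in>UNIV. Q a b * y a))"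
    by (subst sum.swap) (simp add: sum_distrib_left mult.assoc)
  also have "\<dots> = 0" using h1 unfolding hor_def by simp
  finally show ?thesis by simp
qed

lemma Bf_contract: assumes ha: "hor y \<alpha>" and hb: "hor y \<beta>" shows "Bf giG \<alpha> \<beta> = (1/\<rho>) * Bf gi \<alpha> \<beta>"
proof -
  have 1: "hor y (\<lambda>a. \<alpha> a * \<beta> b)" for b
  proof -
    have "(\<Sum>r\<in>UNIV. \<alpha> r * \<beta> b * y r) = \<beta> b * (\<Sum>r\<in>UNIV. \<alpha> r * y r)"
      by (simp add: sum_distrib_left ac_simps)
    then show ?thesis using ha unfolding hor_def by simp
  qed
  have 2: "hor y (\<lambda>b. \<alpha> a * \<beta> b)" for a
  proof -
    have "(\<Sum>r\<in>UNIV. \<alpha> a * \<beta> r * y r) = \<alpha> a * (\<Sum>r\<in>UNIV. \<beta> r * y r)"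
      by (simp add: sum_distrib_left ac_simps)
    then show ?thesis using hb unfolding hor_def by simp
  qed
  show ?thesis unfolding Bf_def using contract[of "\<lambda>a b. \<alpha> a * \<beta> b", OF 1 2]
    by (simp add: mult.assoc)
qed

end

definition Sof :: "('n::finite \<Rightarrow> 'n \<Rightarrow> real) \<Rightarrow> ('n \<Rightarrow> 'n \<Rightarrow> 'n \<Rightarrow> real) \<Rightarrow> 'n \<Rightarrow> 'n \<Rightarrow> 'n \<Rightarrow> 'n \<Rightarrow> real" where
  "Sof gi C h i j k = (\<Sum>r\<in>UNIV. C i j r * (\<Sum>s\<in>UNIV. gi r s * C h s k) - C i k r * (\<Sum>s\<in>UNIV. gi r s * C h s j))"

context fdata begin

lemma S_Bf: "Sof gi C a i j k = Bf gi (C i j) (C a k) - Bf gi (C i k) (C a j)"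
proof -
  have 1: "(\<Sum>r\<in>UNIV. C i j r * (\<Sum>s\<in>UNIV. gi r s * C a s k)) = Bf gi (C i j) (C a k)" for i j a k
    unfolding Bf_def by (simp add: sum_distrib_left Csym2[of a _ k] ac_simps)
  show ?thesis unfolding Sof_def sum_subtractf 1 ..
qed

lemma Bf_hor2: "hor y \<alpha> \<Longrightarrow> (\<Sum>a\<in>UNIV. Bf gi \<beta> (\<gamma> a) * y a) = Bf gi \<beta> (\<lambda>r. \<Sum>a\<in>UNIV. y a * \<gamma> a r)"
  by (simp add: Bf_sum2 mult.commute)

end

definition hor4 :: "('n::finite \<Rightarrow> real) \<Rightarrow> ('n \<Rightarrow> 'n \<Rightarrow> 'n \<Rightarrow> 'n \<Rightarrow> real) \<Rightarrow> bool" where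
  "hor4 y T \<longleftrightarrow> (\<forall>i j k. hor y (\<lambda>a. T a i j k)) \<and> (\<forall>a j k. hor y (\<lambda>i. T a i j k))
     \<and> (\<forall>a i k. hor y (\<lambda>j. T a i j k)) \<and> (\<forall>a i j. hor y (\<lambda>k. T a i j k))"

lemma hor_Bf1: assumes "\<And>r. (\<Sum>a\<in>UNIV. y a * \<gamma> a r) = 0" shows "hor y (\<lambda>a. Bf gi (\<gamma> a) \<beta>)"
proof -
  have "Bf gi (\<lambda>r. \<Sum>a\<in>UNIV. y a * \<gamma> a r) \<beta> = (\<Sum>a\<in>UNIV. y a * Bf gi (\<gamma> a) \<beta>)" by (rule Bf_sum1)
  then show ?thesis unfolding hor_def using assms by (simp add: mult.commute Bf_zero1)
qed

lemma hor_Bf2: assumes "\<And>r. (\<Sum>a\<in>UNIV. y a * \<gamma> a r) = 0" shows "hor y (\<lambda>a. Bf gi \<beta> (\<gamma> a))"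
proof -
  have "Bf gi \<beta> (\<lambda>r. \<Sum>a\<in>UNIV. y a * \<gamma> a r) = (\<Sum>a\<in>UNIV. y a * Bf gi \<beta> (\<gamma> a))" by (rule Bf_sum2)
  then show ?thesis unfolding hor_def using assms by (simp add: mult.commute Bf_zero2)
qed

lemma hor_diff: "hor y \<alpha> \<Longrightarrow> hor y \<beta> \<Longrightarrow> hor y (\<lambda>a. \<alpha> a - \<beta> a)"
  unfolding hor_def by (simp add: left_diff_distrib sum_subtractf)

context fdata begin

lemma Cy1: "(\<Sum>a\<in>UNIV. y a * C a b r) = 0"
proof -
  have "C a b r = C b r a" for a by (metis Csym1 Csym2)
  then show ?thesis using Cy[of b r] by (simp add: mult.commute)
qed

lemma Cy2: "(\<Sum>a\<in>UNIV. y a * C b a r) = 0"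
  using Cy1[of b r] by (simp add: Csym1)

lemma Cy3: "(\<Sum>a\<in>UNIV. y a * C b r a) = 0"
  using Cy[of b r] by (simp add: mult.commute)

lemma S_hor4: "hor4 y (Sof gi C)"
  unfolding hor4_def S_Bf
  by (intro conjI allI hor_diff hor_Bf1 hor_Bf2 Cy1 Cy2 Cy3)

end

definition Ricof :: "('n::finite \<Rightarrow> 'n \<Rightarrow> real) \<Rightarrow> ('n \<Rightarrow> 'n \<Rightarrow> 'n \<Rightarrow> 'n \<Rightarrow> real) \<Rightarrow> 'n \<Rightarrow> 'n \<Rightarrow> real" where
  "Ricof gi T i k = (\<Sum>a\<in>UNIV. \<Sum>b\<in>UNIV. gi a b * T a i b k)"

definition Scof :: "('n::finite \<Rightarrow> 'n \<Rightarrow> real) \<Rightarrow> ('n \<Rightarrow> 'n \<Rightarrow> real) \<Rightarrow> real" where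
  "Scof gi R = (\<Sum>i\<in>UNIV. \<Sum>k\<in>UNIV. gi i k * R i k)"

definition Mof :: "('n::finite \<Rightarrow> 'n \<Rightarrow> real) \<Rightarrow> ('n \<Rightarrow> 'n \<Rightarrow> real) \<Rightarrow> ('n \<Rightarrow> 'n \<Rightarrow> 'n \<Rightarrow> 'n \<Rightarrow> real) \<Rightarrow> 'n \<Rightarrow> 'n \<Rightarrow> real" where
  "Mof gi hh T i j = (1 / (real CARD('n) - 3)) *
     (Ricof gi T i j - Scof gi (Ricof gi T) * hh i j / (2 * (real CARD('n) - 2)))"

definition KN :: "('n \<Rightarrow> 'n \<Rightarrow> real) \<Rightarrow> ('n \<Rightarrow> 'n \<Rightarrow> real) \<Rightarrow> 'n \<Rightarrow> 'n \<Rightarrow> 'n \<Rightarrow> 'n \<Rightarrow> real" where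
  "KN hh Y a i j k = hh a k * Y i j + hh i j * Y a k - hh j a * Y i k - hh i k * Y j a"

lemma Ric_lin: "Ricof gi (\<lambda>a i j k. c * T1 a i j k + T2 a i j k) = (\<lambda>i k. c * Ricof gi T1 i k + Ricof gi T2 i k)"
  by (rule ext, rule ext) (simp add: Ricof_def sum.distrib sum_distrib_left distrib_left mult.left_commute)

lemma Sc_lin: "Scof gi (\<lambda>i k. c * R1 i k + R2 i k) = c * Scof gi R1 + Scof gi R2"
  by (simp add: Scof_def sum.distrib sum_distrib_left distrib_left mult.left_commute)

lemma M_lin: "Mof gi hh (\<lambda>a i j k. c * T1 a i j k + T2 a i j k) i j = c * Mof gi hh T1 i j + Mof gi hh T2 i j"
  unfolding Mof_def Ric_lin Sc_lin by (simp add: algebra_simps add_divide_distrib)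

lemma swap3: "(\<Sum>i\<in>A. \<Sum>a\<in>B. \<Sum>b\<in>D. f i a b) = (\<Sum>a\<in>B. \<Sum>b\<in>D. \<Sum>i\<in>A. (f i a b::real))"
  by (subst sum.swap) (rule sum.cong[OF refl], rule sum.swap)

lemma hor_Ric1: assumes "hor4 y T" shows "hor y (\<lambda>i. Ricof gi T i k)"
proof -
  have "(\<Sum>i\<in>UNIV. Ricof gi T i k * y i) = (\<Sum>i\<in>UNIV. \<Sum>a\<in>UNIV. \<Sum>b\<in>UNIV. gi a b * (T a i b k * y i))"
    unfolding Ricof_def by (simp add: sum_distrib_right sum_distrib_left ac_simps)
  also have "\<dots> = (\<Sum>a\<in>UNIV. \<Sum>b\<in>UNIV. gi a b * (\<Sum>i\<in>UNIV. T a i b k * y i))"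
    by (subst swap3) (simp add: sum_distrib_left)
  also have "\<dots> = 0" using assms unfolding hor4_def hor_def by simp
  finally show ?thesis unfolding hor_def .
qed

lemma hor_Ric2: assumes "hor4 y T" shows "hor y (Ricof gi T i)"
proof -
  have "(\<Sum>k\<in>UNIV. Ricof gi T i k * y k) = (\<Sum>k\<in>UNIV. \<Sum>a\<in>UNIV. \<Sum>b\<in>UNIV. gi a b * (T a i b k * y k))"
    unfolding Ricof_def by (simp add: sum_distrib_right sum_distrib_left ac_simps)
  also have "\<dots> = (\<Sum>a\<in>UNIV. \<Sum>b\<in>UNIV. gi a b * (\<Sum>k\<in>UNIV. T a i b k * y k))"
    by (subst swap3) (simp add: sum_distrib_left)
  also have "\<dots> = 0" using assms unfolding hor4_def hor_def by simp
  finally show ?thesis unfolding hor_def .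
qed

context fpair begin

lemma Ric_contract: assumes "hor4 y T" shows "Ricof giG T i k = (1/\<rho>) * Ricof gi T i k"
  unfolding Ricof_def
  by (rule contract) (use assms in \<open>auto simp: hor4_def\<close>)

lemma Sc_contract: assumes "\<And>k. hor y (\<lambda>i. R i k)" "\<And>i. hor y (R i)"
  shows "Scof giG R = (1/\<rho>) * Scof gi R"
  unfolding Scof_def by (rule contract) (use assms in auto)

lemma M_contract: assumes "hor4 y T" shows "Mof giG B.h T i j = (1/\<rho>) * Mof gi A.h T i j"
proof -
  have r: "Ricof giG T = (\<lambda>i k. (1/\<rho>) * Ricof gi T i k)" using Ric_contract[OF assms] by auto
  have s: "Scof giG (Ricof gi T) = (1/\<rho>) * Scof gi (Ricof gi T)"
    by (rule Sc_contract) (use hor_Ric1[OF assms] hor_Ric2[OF assms] in auto)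
  have s2: "Scof giG (\<lambda>i k. (1/\<rho>) * Ricof gi T i k) = (1/\<rho>) * Scof giG (Ricof gi T)"
    unfolding Scof_def by (simp add: sum_distrib_left ac_simps)
  have aux: "1/E * ((1/\<rho>) * R - ((1/\<rho>) * ((1/\<rho>) * S)) * (\<rho> * hh) / D) = (1/\<rho>) * (1/E * (R - S * hh / D))"
    for E R S hh D :: real
  proof -
    have e: "((1/\<rho>) * ((1/\<rho>) * S)) * (\<rho> * hh) = (1/\<rho>) * (S * hh)" using rho by simp
    show ?thesis unfolding e by (simp add: right_diff_distrib diff_divide_distrib ac_simps)
  qed
  show ?thesis unfolding Mof_def r s2 s hG by (rule aux)
qed

end

lemma Sc_lin2: "Scof gi (\<lambda>i k. c * R1 i k + d * R2 i k) = c * Scof gi R1 + d * Scof gi R2"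
  by (simp add: Scof_def sum.distrib sum_distrib_left distrib_left mult.left_commute)

context fdata begin

lemma Ric_KN: assumes hY1: "\<And>a. hor y (Y a)" and hY2: "\<And>b. hor y (\<lambda>a. Y a b)"
  shows "Ricof gi (KN h Y) i k = - (real CARD('n) - 3) * Y i k - Scof gi Y * h i k"
proof -
  have t1: "(\<Sum>a\<in>UNIV. \<Sum>b\<in>UNIV. gi a b * (h a k * Y i b)) = Y i k"
  proof -
    have "(\<Sum>a\<in>UNIV. \<Sum>b\<in>UNIV. gi a b * (h a k * Y i b)) = Bf gi (\<lambda>a. h a k) (Y i)"
      unfolding Bf_def by (simp add: ac_simps)
    also have "\<dots> = Y i k" by (rule Bf_hl[OF hY1])
    finally show ?thesis .
  qed
  have t2: "(\<Sum>a\<in>UNIV. \<Sum>b\<in>UNIV. gi a b * (h i b * Y a k)) = Y i k"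
  proof -
    have "(\<Sum>a\<in>UNIV. \<Sum>b\<in>UNIV. gi a b * (h i b * Y a k)) = Bf gi (\<lambda>a. Y a k) (\<lambda>b. h b i)"
      unfolding Bf_def by (simp add: ac_simps hsym[of i])
    also have "\<dots> = Y i k" by (rule Bf_hr[OF hY2])
    finally show ?thesis .
  qed
  have t3: "(\<Sum>a\<in>UNIV. \<Sum>b\<in>UNIV. gi a b * (h b a * Y i k)) = (real CARD('n) - 1) * Y i k"
  proof -
    have "(\<Sum>a\<in>UNIV. \<Sum>b\<in>UNIV. gi a b * (h b a * Y i k)) = (\<Sum>a\<in>UNIV. \<Sum>b\<in>UNIV. gi a b * h a b) * Y i k"
      by (simp add: sum_distrib_right sum_distrib_left hsym ac_simps)
    then show ?thesis by (simp add: trace_h)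
  qed
  have t4: "(\<Sum>a\<in>UNIV. \<Sum>b\<in>UNIV. gi a b * (h i k * Y b a)) = h i k * Scof gi Y"
  proof -
    have "(\<Sum>a\<in>UNIV. \<Sum>b\<in>UNIV. gi a b * (h i k * Y b a)) = h i k * (\<Sum>a\<in>UNIV. \<Sum>b\<in>UNIV. gi b a * Y b a)"
      by (simp add: sum_distrib_left gisym ac_simps)
    also have "(\<Sum>a\<in>UNIV. \<Sum>b\<in>UNIV. gi b a * Y b a) = Scof gi Y"
      unfolding Scof_def by (rule sum.swap)
    finally show ?thesis .
  qed
  have "Ricof gi (KN h Y) i k = (\<Sum>a\<in>UNIV. \<Sum>b\<in>UNIV. gi a b * (h a k * Y i b))
     + (\<Sum>a\<in>UNIV. \<Sum>b\<in>UNIV. gi a b * (h i b * Y a k))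
     - (\<Sum>a\<in>UNIV. \<Sum>b\<in>UNIV. gi a b * (h b a * Y i k))
     - (\<Sum>a\<in>UNIV. \<Sum>b\<in>UNIV. gi a b * (h i k * Y b a))"
    unfolding Ricof_def KN_def by (simp add: sum.distrib sum_subtractf algebra_simps)
  also have "\<dots> = - (real CARD('n) - 3) * Y i k - Scof gi Y * h i k"
    unfolding t1 t2 t3 t4 by (simp add: algebra_simps)
  finally show ?thesis .
qed

lemma M_KN: assumes hY1: "\<And>a. hor y (Y a)" and hY2: "\<And>b. hor y (\<lambda>a. Y a b)"
  and n3: "real CARD('n) > 3"
  shows "Mof gi h (KN h Y) i j = - Y i j"
proof -
  have R: "Ricof gi (KN h Y) = (\<lambda>i k. (- (real CARD('n) - 3)) * Y i k + (- Scof gi Y) * h i k)"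
    using Ric_KN[OF hY1 hY2] by auto
  have trh: "Scof gi h = real CARD('n) - 1" unfolding Scof_def using trace_h by simp
  have S: "Scof gi (Ricof gi (KN h Y)) = - (2 * real CARD('n) - 4) * Scof gi Y"
  proof -
    have "Scof gi (Ricof gi (KN h Y)) = - (real CARD('n) - 3) * Scof gi Y - Scof gi Y * Scof gi h"
      unfolding R Sc_lin2 by (simp add: algebra_simps)
    then show ?thesis unfolding trh by (simp add: algebra_simps)
  qed
  show ?thesis unfolding Mof_def unfolding S unfolding R using n3 by (simp add: field_simps)
qed

end

context fdata begin

lemma C_perm: "C i j k = C j i k" "C i j k = C i k j" "C i j k = C k j i" "C i j k = C j k i" "C i j k = C k i j"
  by (metis Csym1 Csym2)+

lemma S_expand:
  assumes hm: "hor y m"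
  shows "Bf gi (\<lambda>r. \<rho> * C i j r + \<kappa> * (m j * h r i + m i * h r j + h i j * m r))
              (\<lambda>r. \<rho> * C a k r + \<kappa> * (m k * h r a + m a * h r k + h a k * m r))
       - Bf gi (\<lambda>r. \<rho> * C i k r + \<kappa> * (m k * h r i + m i * h r k + h i k * m r))
              (\<lambda>r. \<rho> * C a j r + \<kappa> * (m j * h r a + m a * h r j + h a j * m r))
     = \<rho>^2 * Sof gi C a i j k + \<rho> * \<kappa> * KN h (\<lambda>p q. Bf gi (C p q) m) a i j k
       + \<kappa>^2 * KN h (\<lambda>p q. m p * m q + Bf gi m m / 2 * h p q) a i j k"
proof -
  have e1: "Bf gi (C p q) (\<lambda>r. h r s) = C p q s" for p q s by (rule Bf_hr[OF hor_C])
  have e2: "Bf gi (\<lambda>r. h r s) (C p q) = C p q s" for p q s by (rule Bf_hl[OF hor_C])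
  have e3: "Bf gi (\<lambda>r. h r p) (\<lambda>r. h r q) = h p q" for p q using Bf_hl[OF hor_h, of p q] by simp
  have e4: "Bf gi (\<lambda>r. h r p) m = m p" for p by (rule Bf_hl[OF hm])
  have e5: "Bf gi m (\<lambda>r. h r p) = m p" for p by (rule Bf_hr[OF hm])
  have e6: "Bf gi m (C p q) = Bf gi (C p q) m" for p q by (rule Bf_sym)
  have X: "Bf gi (C j a) m = Bf gi (C a j) m" using ext[of "C j a" "C a j", OF Csym1] by simp
  have hs: "h i a = h a i" "h j a = h a j" "h k a = h a k" "h j i = h i j" "h k i = h i k" "h k j = h j k"
    by (simp_all add: hsym)
  have cs: "C i j a = C a i j" "C a k i = C a i k" "C i k a = C a i k" "C i k j = C i j k" "C a j i = C a i j"
     "C a k j = C a j k"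
    by (metis Csym1 Csym2)+
  show ?thesis
    unfolding S_Bf KN_def
    apply (simp only: Bf_add1 Bf_add2 Bf_cmult1 Bf_cmult2)
    apply (simp only: e1 e2 e3 e4 e5 e6 X hs cs)
    apply (simp add: power2_eq_square algebra_simps)
    done
qed

end

definition etaof :: "real \<Rightarrow> ('n::finite \<Rightarrow> 'n \<Rightarrow> real) \<Rightarrow> ('n \<Rightarrow> 'n \<Rightarrow> real) \<Rightarrow> ('n \<Rightarrow> 'n \<Rightarrow> 'n \<Rightarrow> 'n \<Rightarrow> real) \<Rightarrow> 'n \<Rightarrow> 'n \<Rightarrow> 'n \<Rightarrow> 'n \<Rightarrow> real" where
  "etaof Fv gi hh T a i j k = (1 / Fv) * (T a i j k
      - (hh j a * Mof gi hh T i k + hh i k * Mof gi hh T j a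
         - hh a k * Mof gi hh T i j - hh i j * Mof gi hh T a k))"

lemma hor_lin: "hor y \<alpha> \<Longrightarrow> hor y \<beta> \<Longrightarrow> hor y (\<lambda>p. c * \<alpha> p + d * \<beta> p)"
  unfolding hor_def by (simp add: sum.distrib distrib_right mult.assoc flip: sum_distrib_left)

lemma KN_lin: "KN hh (\<lambda>p q. c * X p q + d * N p q) a i j k = c * KN hh X a i j k + d * KN hh N a i j k"
  unfolding KN_def by (simp add: algebra_simps)

context fpair begin

theorem eta_main:
  assumes hm: "hor y m" and c: "c > 0"
    and CGdef: "\<And>a b r. CG a b r = \<rho> * C a b r + \<kappa> * (m b * A.h r a + m a * A.h r b + A.h a b * m r)"
    and rhodef: "\<rho> = c * G / F"
    and n3: "real CARD('a) > 3"
  shows "etaof G giG B.h (Sof giG CG) a i j k = c * etaof F gi A.h (Sof gi C) a i j k"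
proof -
  define X where "X p q = Bf gi (C p q) m" for p q
  define N where "N p q = m p * m q + Bf gi m m / 2 * A.h p q" for p q
  define Y where "Y p q = \<kappa> * X p q + (\<kappa>^2 / \<rho>) * N p q" for p q
  have CGe: "CG p q = (\<lambda>r. \<rho> * C p q r + \<kappa> * (m q * A.h r p + m p * A.h r q + A.h p q * m r))" for p q
    using CGdef by auto
  have SG: "Sof giG CG a i j k = \<rho> * Sof gi C a i j k + KN A.h Y a i j k" for a i j k
  proof -
    have "Sof giG CG a i j k = Bf giG (CG i j) (CG a k) - Bf giG (CG i k) (CG a j)" by (rule B.S_Bf)
    also have "\<dots> = (1/\<rho>) * (Bf gi (CG i j) (CG a k) - Bf gi (CG i k) (CG a j))"
      by (simp add: Bf_contract B.hor_C right_diff_distrib)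
    also have "\<dots> = (1/\<rho>) * (\<rho>^2 * Sof gi C a i j k + \<rho> * \<kappa> * KN A.h X a i j k + \<kappa>^2 * KN A.h N a i j k)"
      unfolding CGe X_def N_def by (subst A.S_expand[OF hm]) (simp add: mult.commute)
    also have "\<dots> = \<rho> * Sof gi C a i j k + KN A.h Y a i j k"
      unfolding Y_def KN_lin using rho by (simp add: field_simps power2_eq_square)
    finally show ?thesis .
  qed
  have SGf: "Sof giG CG = (\<lambda>a i j k. \<rho> * Sof gi C a i j k + KN A.h Y a i j k)"
    using SG by (intro ext) simp
  have hX1: "hor y (X p)" for p unfolding X_def by (rule hor_Bf1) (rule A.Cy2)
  have hX2: "hor y (\<lambda>p. X p q)" for q unfolding X_def by (rule hor_Bf1) (rule A.Cy1)
  have hN1: "hor y (N p)" for p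
  proof -
    have "N p = (\<lambda>q. m p * m q + (Bf gi m m / 2) * A.h q p)" unfolding N_def by (auto simp: A.hsym)
    moreover have "hor y (\<lambda>q. m p * m q + (Bf gi m m / 2) * A.h q p)" by (rule hor_lin[OF hm A.hor_h])
    ultimately show ?thesis by (simp only:)
  qed
  have hN2: "hor y (\<lambda>p. N p q)" for q
  proof -
    have "(\<lambda>p. N p q) = (\<lambda>p. m q * m p + (Bf gi m m / 2) * A.h p q)" unfolding N_def by (auto simp: ac_simps)
    moreover have "hor y (\<lambda>p. m q * m p + (Bf gi m m / 2) * A.h p q)" by (rule hor_lin[OF hm A.hor_h])
    ultimately show ?thesis by (simp only:)
  qed
  have hY1: "hor y (Y p)" for p unfolding Y_def by (rule hor_lin[OF hX1 hN1])
  have hY2: "hor y (\<lambda>p. Y p q)" for q unfolding Y_def by (rule hor_lin[OF hX2 hN2])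
  have MG: "Mof giG B.h (Sof giG CG) p q = Mof gi A.h (Sof gi C) p q - Y p q / \<rho>" for p q
  proof -
    have "Mof giG B.h (Sof giG CG) p q = (1/\<rho>) * Mof gi A.h (Sof giG CG) p q"
      by (rule M_contract[OF B.S_hor4])
    also have "\<dots> = (1/\<rho>) * (\<rho> * Mof gi A.h (Sof gi C) p q + Mof gi A.h (KN A.h Y) p q)"
      unfolding SGf M_lin ..
    also have "\<dots> = Mof gi A.h (Sof gi C) p q - Y p q / \<rho>"
      using A.M_KN[OF hY1 hY2 n3] rho by (simp add: field_simps)
    finally show ?thesis .
  qed
  have F0: "F > 0" by (rule A.Fpos)
  have G0: "G > 0" by (rule B.Fpos)
  show ?thesis
    unfolding etaof_def MG SG hG KN_def using F0 G0 rho c unfolding rhodef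
    by (simp add: field_simps)
qed

end

lemma Scurv_Sof: "Scurv F y = Sof (fund_inv F y) (cart F y)"
  by (intro ext) (simp add: Scurv_def Sof_def cart_up_def)

lemma Sric_Ricof: "Sric F y = Ricof (fund_inv F y) (Scurv F y)"
  by (intro ext) (simp add: Sric_def Ricof_def)

lemma Mten_Mof: "Mten F y = Mof (fund_inv F y) (hang F y) (Scurv F y)"
  by (intro ext) (simp add: Mten_def Mof_def Sscal_def Scof_def Sric_Ricof)

lemma eta_etaof: "eta F y a i j k = etaof (F y) (fund_inv F y) (hang F y) (Sof (fund_inv F y) (cart F y)) a i j k"
  by (simp add: eta_def etaof_def Mten_Mof Scurv_Sof)

lemma fin_fdata:
  assumes fin: "finsler F" and y: "y \<noteq> 0"
  shows "fdata (F y) (\<lambda>i. y$i) (lvec F y) (fund F y) (fund_inv F y) (cart F y)"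
proof
  show "0 < F y" using fin_pos[OF fin y] .
  show "fund F y i j = fund F y j i" for i j using fin_gsym[OF fin y] .
  show "(\<Sum>s\<in>UNIV. fund_inv F y r s * fund F y s k) = (if r = k then 1 else 0)" for r k
    using fin_inv(1)[OF fin y] .
  show "(\<Sum>s\<in>UNIV. fund F y r s * fund_inv F y s k) = (if r = k then 1 else 0)" for r k
    using fin_inv(2)[OF fin y] .
  show "cart F y i j k = cart F y j i k" for i j k using fin_Csym1[OF fin y] .
  show "cart F y i j k = cart F y i k j" for i j k using fin_Csym2[OF fin y] .
  show "(\<Sum>k\<in>UNIV. cart F y i j k * y $ k) = 0" for i j using fin_Cy[OF fin y] .
  show "(\<Sum>j\<in>UNIV. fund F y i j * y $ j) = F y * lvec F y i" for i using fin_gy[OF fin y] .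
  show "(\<Sum>i\<in>UNIV. lvec F y i * y $ i) = F y" using fin_ly[OF fin y] .
qed


theorem pointwise:
  fixes F :: "real^'n::finite \<Rightarrow> real" and c :: real and b :: "real^'n"
  assumes finF: "finsler F" and finG: "finsler (\<lambda>y. c * F y + b \<bullet> y)" and c: "c > 0"
    and y: "y \<noteq> 0" and n: "CARD('n) > 3"
  shows "eta (\<lambda>y. c * F y + b \<bullet> y) y a i j k = c * eta F y a i j k"
proof -
  let ?G = "\<lambda>y. c * F y + b \<bullet> y"
  define \<rho> where "\<rho> = c * ?G y / F y"
  define m where "m a = lvec ?G y a - (?G y / F y) * lvec F y a" for a
  have Fp: "F y > 0" using fin_pos[OF finF y] .
  have Gp: "?G y > 0" using fin_pos[OF finG y] .
  interpret A: fdata "F y" "\<lambda>i. y$i" "lvec F y" "fund F y" "fund_inv F y" "cart F y"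
    by (rule fin_fdata[OF finF y])
  interpret B: fdata "?G y" "\<lambda>i. y$i" "lvec ?G y" "fund ?G y" "fund_inv ?G y" "cart ?G y"
    by (rule fin_fdata[OF finG y])
  have hA: "A.h = hang F y" by (intro ext) (simp add: A.h_def hang_def)
  have hB: "B.h = hang ?G y" by (intro ext) (simp add: B.h_def hang_def)
  interpret P: fpair "F y" "\<lambda>i. y$i" "lvec F y" "fund F y" "fund_inv F y" "cart F y"
      "?G y" "lvec ?G y" "fund ?G y" "fund_inv ?G y" "cart ?G y" \<rho>
  proof
    show "0 < \<rho>" unfolding \<rho>_def using Fp Gp c by simp
    show "B.h i j = \<rho> * A.h i j" for i j unfolding hA hB \<rho>_def by (rule G_hang[OF finF finG y])
  qed
  have hm: "hor (\<lambda>i. y$i) m" unfolding hor_def m_def using G_my[OF finF finG y] by simp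
  have CG: "cart ?G y p q r = \<rho> * cart F y p q r + (c / (2 * F y)) * (m q * A.h r p + m p * A.h r q + A.h p q * m r)"
    for p q r unfolding hA m_def \<rho>_def using G_cart[OF finF finG y, of p q r] by (simp add: ac_simps)
  have main: "etaof (?G y) (fund_inv ?G y) B.h (Sof (fund_inv ?G y) (cart ?G y)) a i j k
      = c * etaof (F y) (fund_inv F y) A.h (Sof (fund_inv F y) (cart F y)) a i j k"
    by (rule P.eta_main[OF hm c CG]) (use n in \<open>simp_all add: \<rho>_def\<close>)
  show ?thesis using main unfolding hA hB eta_etaof .
qed

theorem proposition2:
  fixes L :: "real^'n::finite \<Rightarrow> real^'n \<Rightarrow> real"
    and \<sigma> :: "real^'n \<Rightarrow> real"
    and b :: "real^'n \<Rightarrow> real^'n"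
    and U :: "(real^'n) set"
  assumes "CARD('n) > 4"
    and "open U"
    and "\<forall>x\<in>U. finsler (L x)"
    and "\<forall>x\<in>U. finsler (\<lambda>y. exp (\<sigma> x) * L x y + b x \<bullet> y)"
  shows "\<forall>x\<in>U. \<forall>y. y \<noteq> 0 \<longrightarrow> (\<forall>h i j k.
           eta (\<lambda>y. exp (\<sigma> x) * L x y + b x \<bullet> y) y h i j k = exp (\<sigma> x) * eta (L x) y h i j k)"
proof (intro ballI allI impI)
  fix x y h i j k assume x: "x \<in> U" and y: "(y::real^'n) \<noteq> 0"
  show "eta (\<lambda>y. exp (\<sigma> x) * L x y + b x \<bullet> y) y h i j k = exp (\<sigma> x) * eta (L x) y h i j k"
    by (rule pointwise) (use assms x y in auto)
qed

end
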